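(* Let $\alpha:\Sigma^\Delta\to(H_1,V_1)$ and $\beta:\Sigma^\Delta\to(H_2,V_2)$ be surjective morphisms onto finite forest algebras, and suppose the derived forest category $C=D_{\alpha,\beta}$ is locally distributive. Then $C$ divides some finite distributive forest algebra.
   Context: Forest algebras $(H,V)$: $H$ is an additive monoid, $V$ is a monoid acting faithfully on $H$, there are insertion elements $I_h\in V$ with $I_h h'=h+h'$, and every $h$ is of the form $v\cdot 0$. All forest algebras are horizontally commutative and idempotent. We write $h+v$ for $I_h v$. $\Sigma^\Delta=(H_\Sigma,V_\Sigma)$ is the free forest algebra over the finite alphabet $\Sigma$: forests are finite sets of unordered trees, and contexts are forests with one leaf replaced by a hole. $(H,V)$ is distributive if $v(h_1+h_2)=vh_1+vh_2$. Derived forest category $D_{\alpha,\beta}$. Its objects are the elements of $H_2$. For $h,h'\in H_2$, the arrows from $h$ to $h'$ are equivalence classes $[h,p,h']$ of triples with $p\in V_\Sigma$ and $\beta(p)h=h'$, where $(h,p,h')\sim(h,q,h')$ iff $\alpha(ps)=\alpha(qs)$ for all $s\in H_\Sigma$ with $\beta(s)=h$. Composition is $[h_2,p,h_3]\cdot[h_1,q,h_2]=[h_1,pq,h_3]$, with identities $[h,1,h]$. Half-arrows ending at $h$ are pairs $(\alpha(s),h)$ with $s\in H_\Sigma$ and $\beta(s)=h$. Sums of half-arrows are taken componentwise. The action of an arrow on a half-arrow is $[h,p,h']\cdot(h_1,h)=(\alpha(p)h_1,h')$. The sum of an arrow and a half-arrow is $[h,p,h']+(\alpha(s),\beta(s))=[h,\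 p+s,\ h'+\beta(s)]$, where $p+s$ is the context $p$ with the forest $s$ added at top level; sums in the other order are analogous. $C$ is locally distributive if for every object $h$, all half-arrows $x_1,x_2$ ending at $h$, and every arrow $v$ from $h$ to some $h'$, we have $v\cdot(x_1+x_2)=v\cdot x_1+v\cdot x_2$. $C$ divides a forest algebra $(H,V)$ if there exist a nonempty set $K_x\subseteq H$ for each half-arrow $x$ and a nonempty set $K_e\subseteq V$ for each arrow $e$ satisfying the following conditions. Preservation of operations: - $K_fK_e\subseteq K_{fe}$ for composable arrows; - $K_eK_x\subseteq K_{e\cdot x}$ when the arrow $e$ starts at the endpoint of the half-arrow $x$; - $K_x+K_y\subseteq K_{x+y}$; - $K_x+K_f\subseteq K_{x+f}$ and $K_f+K_x\subseteq K_{f+x}$ for half-arrows $x,y$ and arrows $f$. Injectivity: - distinct arrows with the same source and target have disjoint sets; - distinct half-arrows with the same end object have disjoint sets. *)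

theory Defs
  imports Main "HOL-Library.FSet"
begin

record ('h, 'v) forest_algebra =
  hcar :: "'h set"
  vcar :: "'v set"
  hadd :: "'h \<Rightarrow> 'h \<Rightarrow> 'h"
  hzero :: "'h"
  vmul :: "'v \<Rightarrow> 'v \<Rightarrow> 'v"
  vone :: "'v"
  act :: "'v \<Rightarrow> 'h \<Rightarrow> 'h"
  ins :: "'h \<Rightarrow> 'v"

definition forest_algebra :: "('h, 'v) forest_algebra \<Rightarrow> bool" where
  "forest_algebra A \<longleftrightarrow>
     \<comment> \<open>(H,+,0) is a commutative idempotent monoid\<close>
     hzero A \<in> hcar A \<and>
     (\<forall>x\<in>hcar A. \<forall>y\<in>hcar A. hadd A x y \<in> hcar A) \<and>
     (\<forall>x\<in>hcar A. \<forall>y\<in>hcar A. \<forall>z\<in>hcar A. hadd A (hadd A x y) z = hadd A x (hadd A y z)) \<and>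
     (\<forall>x\<in>hcar A. hadd A (hzero A) x = x \<and> hadd A x (hzero A) = x) \<and>
     (\<forall>x\<in>hcar A. \<forall>y\<in>hcar A. hadd A x y = hadd A y x) \<and>
     (\<forall>x\<in>hcar A. hadd A x x = x) \<and>
     \<comment> \<open>(V,\<cdot>,1) is a monoid\<close>
     vone A \<in> vcar A \<and>
     (\<forall>x\<in>vcar A. \<forall>y\<in>vcar A. vmul A x y \<in> vcar A) \<and>
     (\<forall>x\<in>vcar A. \<forall>y\<in>vcar A. \<forall>z\<in>vcar A. vmul A (vmul A x y) z = vmul A x (vmul A y z)) \<and>
     (\<forall>x\<in>vcar A. vmul A (vone A) x = x \<and> vmul A x (vone A) = x) \<and>
     \<comment> \<open>V acts on H (monoid action)\<close>
     (\<forall>v\<in>vcar A. \<forall>h\<in>hcar A. act A v h \<in> hcar A) \<and>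
     (\<forall>h\<in>hcar A. act A (vone A) h = h) \<and>
     (\<forall>v\<in>vcar A. \<forall>w\<in>vcar A. \<forall>h\<in>hcar A. act A (vmul A v w) h = act A v (act A w h)) \<and>
     \<comment> \<open>the action is faithful\<close>
     (\<forall>v\<in>vcar A. \<forall>w\<in>vcar A. (\<forall>h\<in>hcar A. act A v h = act A w h) \<longrightarrow> v = w) \<and>
     \<comment> \<open>insertion elements\<close>
     (\<forall>h\<in>hcar A. ins A h \<in> vcar A \<and> (\<forall>h'\<in>hcar A. act A (ins A h) h' = hadd A h h')) \<and>
     \<comment> \<open>every h is of the form v 0\<close>
     (\<forall>h\<in>hcar A. \<exists>v\<in>vcar A. h = act A v (hzero A))"

definition finite_forest_algebra :: "('h, 'v) forest_algebra \<Rightarrow> bool" where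
  "finite_forest_algebra A \<longleftrightarrow> forest_algebra A \<and> finite (hcar A) \<and> finite (vcar A)"

definition distributive :: "('h, 'v) forest_algebra \<Rightarrow> bool" where
  "distributive A \<longleftrightarrow>
     (\<forall>v\<in>vcar A. \<forall>h1\<in>hcar A. \<forall>h2\<in>hcar A.
        act A v (hadd A h1 h2) = hadd A (act A v h1) (act A v h2))"

text \<open>h + v is I_h v; by horizontal commutativity v + h is the same element.\<close>
definition hvadd :: "('h, 'v) forest_algebra \<Rightarrow> 'h \<Rightarrow> 'v \<Rightarrow> 'v" where
  "hvadd A h v = vmul A (ins A h) v"

definition vhadd :: "('h, 'v) forest_algebra \<Rightarrow> 'v \<Rightarrow> 'h \<Rightarrow> 'v" where
  "vhadd A v h = vmul A (ins A h) v"

text \<open>Unordered trees whose children form a finite set (idempotent, commutative forests).\<close>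
datatype 'a tree = Node 'a "'a tree fset"

type_synonym 'a forest = "'a tree fset"

text \<open>Contexts: a forest with one leaf replaced by a hole.
  CHole F is the context (hole + F); CNode F a c is the context F + a(c).\<close>
datatype 'a ctx = CHole "'a forest" | CNode "'a forest" 'a "'a ctx"

fun plug :: "'a ctx \<Rightarrow> 'a forest \<Rightarrow> 'a forest" where
  "plug (CHole F) s = F |\<union>| s"
| "plug (CNode F a c) s = F |\<union>| {|Node a (plug c s)|}"

fun cadd :: "'a forest \<Rightarrow> 'a ctx \<Rightarrow> 'a ctx" where
  "cadd s (CHole F) = CHole (s |\<union>| F)"
| "cadd s (CNode F a c) = CNode (s |\<union>| F) a c"

fun ccomp :: "'a ctx \<Rightarrow> 'a ctx \<Rightarrow> 'a ctx" where
  "ccomp (CHole F) q = cadd F q"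
| "ccomp (CNode F a c) q = CNode F a (ccomp c q)"

definition cone :: "'a ctx" where "cone = CHole {||}"

definition free_morphism ::
  "('h, 'v) forest_algebra \<Rightarrow> ('a forest \<Rightarrow> 'h) \<Rightarrow> ('a ctx \<Rightarrow> 'v) \<Rightarrow> bool" where
  "free_morphism A fh fv \<longleftrightarrow>
     (\<forall>s. fh s \<in> hcar A) \<and> (\<forall>p. fv p \<in> vcar A) \<and>
     fh {||} = hzero A \<and>
     (\<forall>s t. fh (s |\<union>| t) = hadd A (fh s) (fh t)) \<and>
     fv cone = vone A \<and>
     (\<forall>p q. fv (ccomp p q) = vmul A (fv p) (fv q)) \<and>
     (\<forall>p s. fh (plug p s) = act A (fv p) (fh s)) \<and>
     (\<forall>s. fv (CHole s) = ins A (fh s))"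

definition surj_free_morphism ::
  "('h, 'v) forest_algebra \<Rightarrow> ('a forest \<Rightarrow> 'h) \<Rightarrow> ('a ctx \<Rightarrow> 'v) \<Rightarrow> bool" where
  "surj_free_morphism A fh fv \<longleftrightarrow>
     free_morphism A fh fv \<and> range fh = hcar A \<and> range fv = vcar A"

definition is_arrow ::
  "('h2, 'v2) forest_algebra \<Rightarrow> ('a ctx \<Rightarrow> 'v2) \<Rightarrow> 'h2 \<Rightarrow> 'a ctx \<Rightarrow> 'h2 \<Rightarrow> bool" where
  "is_arrow B bv h p h' \<longleftrightarrow> h \<in> hcar B \<and> act B (bv p) h = h'"

definition arrow_equiv ::
  "('a forest \<Rightarrow> 'h1) \<Rightarrow> ('a forest \<Rightarrow> 'h2) \<Rightarrow> 'h2 \<Rightarrow> 'a ctx \<Rightarrow> 'a ctx \<Rightarrow> bool" where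
  "arrow_equiv ah bh h p q \<longleftrightarrow> (\<forall>s. bh s = h \<longrightarrow> ah (plug p s) = ah (plug q s))"

definition arrow_class ::
  "('a forest \<Rightarrow> 'h1) \<Rightarrow> ('h2, 'v2) forest_algebra \<Rightarrow> ('a forest \<Rightarrow> 'h2) \<Rightarrow> ('a ctx \<Rightarrow> 'v2)
   \<Rightarrow> 'h2 \<Rightarrow> 'a ctx \<Rightarrow> 'h2 \<Rightarrow> ('h2 \<times> 'a ctx \<times> 'h2) set" where
  "arrow_class ah B bh bv h p h' =
     {(h, q, h') | q. is_arrow B bv h q h' \<and> arrow_equiv ah bh h p q}"

definition half_arrows :: "('a forest \<Rightarrow> 'h1) \<Rightarrow> ('a forest \<Rightarrow> 'h2) \<Rightarrow> ('h1 \<times> 'h2) set" where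
  "half_arrows ah bh = range (\<lambda>s. (ah s, bh s))"

definition half_sum ::
  "('h1, 'v1) forest_algebra \<Rightarrow> ('h2, 'v2) forest_algebra \<Rightarrow> 'h1 \<times> 'h2 \<Rightarrow> 'h1 \<times> 'h2 \<Rightarrow> 'h1 \<times> 'h2" where
  "half_sum A B x y = (hadd A (fst x) (fst y), hadd B (snd x) (snd y))"

definition arrow_act ::
  "('h1, 'v1) forest_algebra \<Rightarrow> ('a ctx \<Rightarrow> 'v1) \<Rightarrow> 'h2 \<Rightarrow> 'a ctx \<Rightarrow> 'h2 \<Rightarrow> 'h1 \<times> 'h2 \<Rightarrow> 'h1 \<times> 'h2" where
  "arrow_act A av h p h' x = (act A (av p) (fst x), h')"

definition locally_distributive ::
  "('h1, 'v1) forest_algebra \<Rightarrow> ('h2, 'v2) forest_algebra \<Rightarrow> ('a forest \<Rightarrow> 'h1) \<Rightarrow> ('a ctx \<Rightarrow> 'v1)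
   \<Rightarrow> ('a forest \<Rightarrow> 'h2) \<Rightarrow> ('a ctx \<Rightarrow> 'v2) \<Rightarrow> bool" where
  "locally_distributive A B ah av bh bv \<longleftrightarrow>
     (\<forall>h\<in>hcar B. \<forall>x1\<in>half_arrows ah bh. \<forall>x2\<in>half_arrows ah bh. \<forall>p h'.
        snd x1 = h \<and> snd x2 = h \<and> is_arrow B bv h p h' \<longrightarrow>
        arrow_act A av h p h' (half_sum A B x1 x2) =
        half_sum A B (arrow_act A av h p h' x1) (arrow_act A av h p h' x2))"

text \<open>Division of D_{alpha,beta} by a forest algebra F. Arrows are handled through
  representatives (h,p,h'); the sets K_e depend only on the class arrow_class ... h p h'.\<close>
definition derived_divides ::
  "('h1, 'v1) forest_algebra \<Rightarrow> ('h2, 'v2) forest_algebra \<Rightarrow> ('a forest \<Rightarrow> 'h1) \<Rightarrow> ('a ctx \<Rightarrow> 'v1)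
   \<Rightarrow> ('a forest \<Rightarrow> 'h2) \<Rightarrow> ('a ctx \<Rightarrow> 'v2) \<Rightarrow> ('h, 'v) forest_algebra \<Rightarrow> bool" where
  "derived_divides A B ah av bh bv F \<longleftrightarrow>
    (\<exists>(KH :: 'h1 \<times> 'h2 \<Rightarrow> 'h set) (KV :: ('h2 \<times> 'a ctx \<times> 'h2) set \<Rightarrow> 'v set).
      let cls = arrow_class ah B bh bv in
      \<comment> \<open>nonempty sets in F\<close>
      (\<forall>x\<in>half_arrows ah bh. KH x \<noteq> {} \<and> KH x \<subseteq> hcar F) \<and>
      (\<forall>h p h'. is_arrow B bv h p h' \<longrightarrow> KV (cls h p h') \<noteq> {} \<and> KV (cls h p h') \<subseteq> vcar F) \<and>
      \<comment> \<open>K_f K_e \<subseteq> K_{fe}\<close>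
      (\<forall>h1 h2 h3 p q. is_arrow B bv h2 p h3 \<and> is_arrow B bv h1 q h2 \<longrightarrow>
         (\<forall>f\<in>KV (cls h2 p h3). \<forall>e\<in>KV (cls h1 q h2). vmul F f e \<in> KV (cls h1 (ccomp p q) h3))) \<and>
      \<comment> \<open>K_e K_x \<subseteq> K_{e x}\<close>
      (\<forall>x\<in>half_arrows ah bh. \<forall>p h'. is_arrow B bv (snd x) p h' \<longrightarrow>
         (\<forall>v\<in>KV (cls (snd x) p h'). \<forall>k\<in>KH x.
            act F v k \<in> KH (arrow_act A av (snd x) p h' x))) \<and>
      \<comment> \<open>K_x + K_y \<subseteq> K_{x+y}\<close>
      (\<forall>x\<in>half_arrows ah bh. \<forall>y\<in>half_arrows ah bh.
         (\<forall>k\<in>KH x. \<forall>l\<in>KH y. hadd F k l \<in> KH (half_sum A B x y))) \<and>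
      \<comment> \<open>K_x + K_f \<subseteq> K_{x+f}, with x = (alpha s, beta s) and f = [h,p,h']\<close>
      (\<forall>s h p h'. is_arrow B bv h p h' \<longrightarrow>
         (\<forall>k\<in>KH (ah s, bh s). \<forall>v\<in>KV (cls h p h').
            hvadd F k v \<in> KV (cls h (cadd s p) (hadd B (bh s) h')))) \<and>
      \<comment> \<open>K_f + K_x \<subseteq> K_{f+x}\<close>
      (\<forall>s h p h'. is_arrow B bv h p h' \<longrightarrow>
         (\<forall>k\<in>KH (ah s, bh s). \<forall>v\<in>KV (cls h p h').
            vhadd F v k \<in> KV (cls h (cadd s p) (hadd B h' (bh s))))) \<and>
      \<comment> \<open>injectivity on arrows with the same source and target\<close>
      (\<forall>h p q h'. is_arrow B bv h p h' \<and> is_arrow B bv h q h' \<and> cls h p h' \<noteq> cls h q h' \<longrightarrow>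
         KV (cls h p h') \<inter> KV (cls h q h') = {}) \<and>
      \<comment> \<open>injectivity on half-arrows with the same end object\<close>
      (\<forall>x\<in>half_arrows ah bh. \<forall>y\<in>half_arrows ah bh. x \<noteq> y \<and> snd x = snd y \<longrightarrow>
         KH x \<inter> KH y = {}))"

end

theory Submission
  imports Defs "HOL-Library.FuncSet"
begin


definition Galg :: "'w set \<Rightarrow> ('w set, 'w set \<Rightarrow> 'w set) forest_algebra" where
 "Galg W = \<lparr>hcar = Pow W,
    vcar = {g \<in> Pow W \<rightarrow>\<^sub>E Pow W. \<forall>U\<in>Pow W. \<forall>V\<in>Pow W. g (U \<inter> V) = g U \<inter> g V},
    hadd = (\<inter>), hzero = W, vmul = \<lambda>f g. restrict (f \<circ> g) (Pow W),
    vone = restrict id (Pow W), act = \<lambda>g U. g U,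
    ins = \<lambda>h. restrict (\<lambda>U. h \<inter> U) (Pow W)\<rparr>"

lemma Galg_vcar: "g \<in> vcar (Galg W) \<longleftrightarrow> g \<in> Pow W \<rightarrow>\<^sub>E Pow W \<and> (\<forall>U\<in>Pow W. \<forall>V\<in>Pow W. g (U \<inter> V) = g U \<inter> g V)"
  by (simp add: Galg_def)

lemma Galg_simps[simp]: "vcar (Galg W) = {g \<in> Pow W \<rightarrow>\<^sub>E Pow W. \<forall>U\<in>Pow W. \<forall>V\<in>Pow W. g (U \<inter> V) = g U \<inter> g V}" "hcar (Galg W) = Pow W" "hadd (Galg W) = (\<inter>)" "hzero (Galg W) = W"
  "vmul (Galg W) f g = restrict (f \<circ> g) (Pow W)" "vone (Galg W) = restrict id (Pow W)"
  "act (Galg W) g U = g U" "ins (Galg W) h = restrict (\<lambda>U. h \<inter> U) (Pow W)"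
  by (simp_all add: Galg_def)

lemma Galg_fa: "forest_algebra (Galg W)"
  unfolding forest_algebra_def
proof (intro conjI)
  show "\<forall>v\<in>vcar (Galg W). \<forall>w\<in>vcar (Galg W). (\<forall>h\<in>hcar (Galg W). act (Galg W) v h = act (Galg W) w h) \<longrightarrow> v = w"
  proof (intro ballI impI)
    fix v w assume v: "v \<in> vcar (Galg W)" and w: "w \<in> vcar (Galg W)"
      and e: "\<forall>h\<in>hcar (Galg W). act (Galg W) v h = act (Galg W) w h"
    show "v = w"
      by (rule PiE_ext[of v "Pow W" "\<lambda>_. Pow W" w]) (use v w e in \<open>auto simp: Galg_vcar\<close>)
  qed
  show "\<forall>x\<in>vcar (Galg W). \<forall>y\<in>vcar (Galg W). vmul (Galg W) x y \<in> vcar (Galg W)"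
    unfolding Galg_simps
  proof (intro ballI)
    fix x y assume x: "x \<in> {g \<in> Pow W \<rightarrow>\<^sub>E Pow W. \<forall>U\<in>Pow W. \<forall>V\<in>Pow W. g (U \<inter> V) = g U \<inter> g V}"
      and y: "y \<in> {g \<in> Pow W \<rightarrow>\<^sub>E Pow W. \<forall>U\<in>Pow W. \<forall>V\<in>Pow W. g (U \<inter> V) = g U \<inter> g V}"
    have yc: "U \<in> Pow W \<Longrightarrow> y U \<in> Pow W" for U using y by (auto simp: PiE_iff)
    have xc: "U \<in> Pow W \<Longrightarrow> x U \<in> Pow W" for U using x by (auto simp: PiE_iff)
    show "restrict (x \<circ> y) (Pow W) \<in> {g \<in> Pow W \<rightarrow>\<^sub>E Pow W. \<forall>U\<in>Pow W. \<forall>V\<in>Pow W. g (U \<inter> V) = g U \<inter> g V}"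
      using x y xc yc by (auto simp: Pi_iff)
  qed
  show "\<forall>x\<in>vcar (Galg W). \<forall>y\<in>vcar (Galg W). \<forall>z\<in>vcar (Galg W).
    vmul (Galg W) (vmul (Galg W) x y) z = vmul (Galg W) x (vmul (Galg W) y z)"
    unfolding Galg_simps
  proof (intro ballI)
    fix x y z assume z: "z \<in> {g \<in> Pow W \<rightarrow>\<^sub>E Pow W. \<forall>U\<in>Pow W. \<forall>V\<in>Pow W. g (U \<inter> V) = g U \<inter> g V}"
    have zc: "U \<in> Pow W \<Longrightarrow> z U \<in> Pow W" for U using z by (auto simp: PiE_iff)
    show "restrict (restrict (x \<circ> y) (Pow W) \<circ> z) (Pow W) = restrict (x \<circ> restrict (y \<circ> z) (Pow W)) (Pow W)"
      by (rule restrict_ext) (use zc in auto)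
  qed
  show "\<forall>x\<in>vcar (Galg W). vmul (Galg W) (vone (Galg W)) x = x \<and> vmul (Galg W) x (vone (Galg W)) = x"
    unfolding Galg_simps
  proof (intro ballI conjI)
    fix x assume x: "x \<in> {g \<in> Pow W \<rightarrow>\<^sub>E Pow W. \<forall>U\<in>Pow W. \<forall>V\<in>Pow W. g (U \<inter> V) = g U \<inter> g V}"
    have xc: "U \<in> Pow W \<Longrightarrow> x U \<in> Pow W" and xe: "U \<notin> Pow W \<Longrightarrow> x U = undefined" for U
      using x by (auto simp: PiE_iff extensional_def)
    show "restrict (restrict id (Pow W) \<circ> x) (Pow W) = x"
    proof
      fix U show "restrict (restrict id (Pow W) \<circ> x) (Pow W) U = x U"
        using xc[of U] xe[of U] by (cases "U \<in> Pow W") auto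
    qed
    show "restrict (x \<circ> restrict id (Pow W)) (Pow W) = x"
    proof
      fix U show "restrict (x \<circ> restrict id (Pow W)) (Pow W) U = x U"
        using xc[of U] xe[of U] by (cases "U \<in> Pow W") auto
    qed
  qed
  show "vone (Galg W) \<in> vcar (Galg W)" unfolding Galg_vcar Galg_simps by auto
  show "\<forall>v\<in>vcar (Galg W). \<forall>h\<in>hcar (Galg W). act (Galg W) v h \<in> hcar (Galg W)"
    unfolding Galg_vcar Galg_simps by auto
  show "\<forall>h\<in>hcar (Galg W). act (Galg W) (vone (Galg W)) h = h" by simp
  show "\<forall>v\<in>vcar (Galg W). \<forall>w\<in>vcar (Galg W). \<forall>h\<in>hcar (Galg W). act (Galg W) (vmul (Galg W) v w) h = act (Galg W) v (act (Galg W) w h)"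
    by simp
  show "\<forall>h\<in>hcar (Galg W). ins (Galg W) h \<in> vcar (Galg W) \<and> (\<forall>h'\<in>hcar (Galg W). act (Galg W) (ins (Galg W) h) h' = hadd (Galg W) h h')"
    unfolding Galg_vcar Galg_simps by auto
  show "\<forall>h\<in>hcar (Galg W). \<exists>v\<in>vcar (Galg W). h = act (Galg W) v (hzero (Galg W))"
  proof
    fix h assume h: "h \<in> hcar (Galg W)"
    show "\<exists>v\<in>vcar (Galg W). h = act (Galg W) v (hzero (Galg W))"
      by (rule bexI[of _ "ins (Galg W) h"]) (use h in \<open>auto simp: Galg_vcar\<close>)
  qed
qed (auto)

lemma Galg_fin: "finite W \<Longrightarrow> finite_forest_algebra (Galg W)"
  unfolding finite_forest_algebra_def using Galg_fa
  by (auto simp: Galg_def intro: finite_subset[OF _ finite_PiE[of "Pow W" "\<lambda>_. Pow W"]])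

lemma Galg_dis: "distributive (Galg W)"
  by (auto simp: distributive_def Galg_vcar)



lemma hadd_cl: "forest_algebra A \<Longrightarrow> x \<in> hcar A \<Longrightarrow> y \<in> hcar A \<Longrightarrow> hadd A x y \<in> hcar A"
proof -
  assume "forest_algebra A"
  then have "\<forall>x\<in>hcar A. \<forall>y\<in>hcar A. hadd A x y \<in> hcar A" unfolding forest_algebra_def by (elim conjE) assumption
  then show "x \<in> hcar A \<Longrightarrow> y \<in> hcar A \<Longrightarrow> hadd A x y \<in> hcar A" by blast
qed
lemma hadd_assoc: "forest_algebra A \<Longrightarrow> x \<in> hcar A \<Longrightarrow> y \<in> hcar A \<Longrightarrow> z \<in> hcar A \<Longrightarrow> hadd A (hadd A x y) z = hadd A x (hadd A y z)"
proof -
  assume "forest_algebra A"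
  then have "\<forall>x\<in>hcar A. \<forall>y\<in>hcar A. \<forall>z\<in>hcar A. hadd A (hadd A x y) z = hadd A x (hadd A y z)" unfolding forest_algebra_def by (elim conjE) assumption
  then show "x \<in> hcar A \<Longrightarrow> y \<in> hcar A \<Longrightarrow> z \<in> hcar A \<Longrightarrow> hadd A (hadd A x y) z = hadd A x (hadd A y z)" by blast
qed
lemma hadd_comm: "forest_algebra A \<Longrightarrow> x \<in> hcar A \<Longrightarrow> y \<in> hcar A \<Longrightarrow> hadd A x y = hadd A y x"
proof -
  assume "forest_algebra A"
  then have "\<forall>x\<in>hcar A. \<forall>y\<in>hcar A. hadd A x y = hadd A y x" unfolding forest_algebra_def by (elim conjE) assumption
  then show "x \<in> hcar A \<Longrightarrow> y \<in> hcar A \<Longrightarrow> hadd A x y = hadd A y x" by blast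
qed
lemma hadd_idem: "forest_algebra A \<Longrightarrow> x \<in> hcar A \<Longrightarrow> hadd A x x = x"
proof -
  assume "forest_algebra A"
  then have "\<forall>x\<in>hcar A. hadd A x x = x" unfolding forest_algebra_def by (elim conjE) assumption
  then show "x \<in> hcar A \<Longrightarrow> hadd A x x = x" by blast
qed
lemma hadd_lidem: "forest_algebra A \<Longrightarrow> x \<in> hcar A \<Longrightarrow> y \<in> hcar A \<Longrightarrow> hadd A x (hadd A x y) = hadd A x y"
  by (metis hadd_assoc hadd_idem)

lemma semil_sum_iff:
  assumes C: "forest_algebra C" and abc: "a \<in> hcar C" "b \<in> hcar C" "c \<in> hcar C"
  shows "hadd C (hadd C a b) c = c \<longleftrightarrow> hadd C a c = c \<and> hadd C b c = c"
proof
  assume e: "hadd C (hadd C a b) c = c"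
  have bc: "hadd C b c \<in> hcar C" using hadd_cl[OF C abc(2,3)] .
  have ac: "hadd C a c \<in> hcar C" using hadd_cl[OF C abc(1,3)] .
  have e2: "hadd C a (hadd C b c) = c" using e hadd_assoc[OF C abc] by simp
  have "hadd C a c = hadd C a (hadd C a (hadd C b c))" using e2 by simp
  also have "\<dots> = hadd C a (hadd C b c)" using hadd_lidem[OF C abc(1) bc] .
  finally have 1: "hadd C a c = c" using e2 by simp
  have "hadd C b (hadd C a c) = hadd C (hadd C b a) c" using hadd_assoc[OF C abc(2,1,3)] by simp
  also have "\<dots> = hadd C (hadd C a b) c" using hadd_comm[OF C abc(1,2)] by simp
  finally have e3: "hadd C b (hadd C a c) = c" using e by simp
  have "hadd C b c = hadd C b (hadd C b (hadd C a c))" using e3 by simp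
  also have "\<dots> = hadd C b (hadd C a c)" using hadd_lidem[OF C abc(2) ac] .
  finally have 2: "hadd C b c = c" using e3 by simp
  show "hadd C a c = c \<and> hadd C b c = c" using 1 2 by simp
next
  assume "hadd C a c = c \<and> hadd C b c = c"
  then show "hadd C (hadd C a b) c = c" using hadd_assoc[OF C abc] by simp
qed
definition hle :: "('h1, 'v1) forest_algebra \<Rightarrow> ('h2, 'v2) forest_algebra \<Rightarrow> 'h1 \<times> 'h2 \<Rightarrow> 'h1 \<times> 'h2 \<Rightarrow> bool" where
  "hle A B x y \<longleftrightarrow> half_sum A B x y = y"

lemma hle_iff: "hle A B x y \<longleftrightarrow> hadd A (fst x) (fst y) = fst y \<and> hadd B (snd x) (snd y) = snd y"
  by (simp add: hle_def half_sum_def prod_eq_iff)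

definition inC :: "('h1, 'v1) forest_algebra \<Rightarrow> ('h2, 'v2) forest_algebra \<Rightarrow> 'h1 \<times> 'h2 \<Rightarrow> bool" where
  "inC A B x \<longleftrightarrow> fst x \<in> hcar A \<and> snd x \<in> hcar B"

context
  fixes A :: "('h1, 'v1) forest_algebra" and B :: "('h2, 'v2) forest_algebra"
  assumes fa: "forest_algebra A" and fb: "forest_algebra B"
begin

lemma inC_sum: "inC A B x \<Longrightarrow> inC A B y \<Longrightarrow> inC A B (half_sum A B x y)"
  unfolding inC_def half_sum_def fst_conv snd_conv
  using hadd_cl[OF fa, of "fst x" "fst y"] hadd_cl[OF fb, of "snd x" "snd y"] by simp

lemma hle_refl: "inC A B x \<Longrightarrow> hle A B x x"
  unfolding inC_def hle_iff using hadd_idem[OF fa, of "fst x"] hadd_idem[OF fb, of "snd x"] by simp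

lemma hle_antisym: "inC A B x \<Longrightarrow> inC A B y \<Longrightarrow> hle A B x y \<Longrightarrow> hle A B y x \<Longrightarrow> x = y"
  unfolding inC_def hle_iff using hadd_comm[OF fa, of "fst x" "fst y"] hadd_comm[OF fb, of "snd x" "snd y"]
  by (simp add: prod_eq_iff)

lemma hle_sum_iff: "inC A B x \<Longrightarrow> inC A B y \<Longrightarrow> inC A B z \<Longrightarrow>
    hle A B (half_sum A B x y) z \<longleftrightarrow> hle A B x z \<and> hle A B y z"
  unfolding inC_def hle_iff half_sum_def fst_conv snd_conv
  using semil_sum_iff[OF fa, of "fst x" "fst y" "fst z"] semil_sum_iff[OF fb, of "snd x" "snd y" "snd z"]
  by (simp add: conj_ac)

lemma hle_trans: "inC A B x \<Longrightarrow> inC A B y \<Longrightarrow> inC A B z \<Longrightarrow> hle A B x y \<Longrightarrow> hle A B y z \<Longrightarrow> hle A B x z"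
  using hle_sum_iff[of x y z] by (simp add: hle_def)

lemma hle_upper: "inC A B x \<Longrightarrow> inC A B y \<Longrightarrow> hle A B x (half_sum A B x y) \<and> hle A B y (half_sum A B x y)"
  using hle_sum_iff[of x y "half_sum A B x y"] hle_refl[of "half_sum A B x y"] inC_sum[of x y] by simp

lemma max_exists:
  assumes "finite T" "T \<noteq> {}" "T \<subseteq> S" and SC: "\<forall>x\<in>S. inC A B x"
    and SS: "\<forall>x\<in>S. \<forall>y\<in>S. half_sum A B x y \<in> S"
  shows "\<exists>m\<in>S. \<forall>x\<in>T. hle A B x m"
  using assms(1,2,3)
proof (induction T rule: finite_ne_induct)
  case (singleton x)
  then have "x \<in> S" by simp
  then show ?case using hle_refl[of x] SC by auto
next
  case (insert x T)
  then obtain m where m: "m \<in> S" "\<forall>y\<in>T. hle A B y m" by auto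
  have x: "x \<in> S" using insert by simp
  have xC: "inC A B x" and mC: "inC A B m" using x m SC by auto
  have sC: "inC A B (half_sum A B x m)" using inC_sum[OF xC mC] .
  show ?case
  proof (rule bexI[of _ "half_sum A B x m"])
    show "half_sum A B x m \<in> S" using SS m x by simp
    show "\<forall>y\<in>insert x T. hle A B y (half_sum A B x m)"
    proof
      fix y assume y: "y \<in> insert x T"
      show "hle A B y (half_sum A B x m)"
      proof (cases "y = x")
        case True then show ?thesis using hle_upper[OF xC mC] by simp
      next
        case False
        then have yT: "y \<in> T" using y by simp
        then have yC: "inC A B y" using insert.prems SC by auto
        show ?thesis using hle_trans[OF yC mC sC] m(2) yT hle_upper[OF xC mC] by simp
      qed
    qed
  qed
qed

end



definition upset :: "('h1, 'v1) forest_algebra \<Rightarrow> ('h2, 'v2) forest_algebra \<Rightarrow> ('a forest \<Rightarrow> 'h1) \<Rightarrow> ('a forest \<Rightarrow> 'h2) \<Rightarrow> 'h1 \<times> 'h2 \<Rightarrow> ('h1 \<times> 'h2) set" where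
  "upset A B ah bh x = {z \<in> half_arrows ah bh. hle A B x z}"

definition KVd :: "('h1, 'v1) forest_algebra \<Rightarrow> ('h2, 'v2) forest_algebra \<Rightarrow> ('a forest \<Rightarrow> 'h1) \<Rightarrow> ('a ctx \<Rightarrow> 'v1) \<Rightarrow> ('a forest \<Rightarrow> 'h2)
   \<Rightarrow> ('h2 \<times> 'a ctx \<times> 'h2) set \<Rightarrow> (('h1 \<times> 'h2) set \<Rightarrow> ('h1 \<times> 'h2) set) set" where
  "KVd A B ah av bh c = {g \<in> vcar (Galg (half_arrows ah bh)). \<forall>t\<in>c. \<forall>x\<in>half_arrows ah bh.
      snd x = fst t \<longrightarrow> g (upset A B ah bh x) = upset A B ah bh (arrow_act A av (fst t) (fst (snd t)) (snd (snd t)) x)}"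

lemma fm_facts:
  assumes "free_morphism A ah av"
  shows "ah s \<in> hcar A" "av p \<in> vcar A" "ah (s |\<union>| t) = hadd A (ah s) (ah t)"
    "av (ccomp p q) = vmul A (av p) (av q)" "ah (plug p s) = act A (av p) (ah s)"
    "av (CHole s) = ins A (ah s)"
proof -
  note d = assms[unfolded free_morphism_def]
  show "ah s \<in> hcar A" using d by (elim conjE) blast
  show "av p \<in> vcar A" using d by (elim conjE) blast
  show "ah (s |\<union>| t) = hadd A (ah s) (ah t)" using d by (elim conjE) blast
  show "av (ccomp p q) = vmul A (av p) (av q)" using d by (elim conjE) blast
  show "ah (plug p s) = act A (av p) (ah s)" using d by (elim conjE) blast
  show "av (CHole s) = ins A (ah s)" using d by (elim conjE) blast
qed

lemma act_comp: "forest_algebra A \<Longrightarrow> v \<in> vcar A \<Longrightarrow> w \<in> vcar A \<Longrightarrow> h \<in> hcar A \<Longrightarrow> act A (vmul A v w) h = act A v (act A w h)"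
proof -
  assume "forest_algebra A"
  then have "\<forall>v\<in>vcar A. \<forall>w\<in>vcar A. \<forall>h\<in>hcar A. act A (vmul A v w) h = act A v (act A w h)"
    unfolding forest_algebra_def by (elim conjE) assumption
  then show "v \<in> vcar A \<Longrightarrow> w \<in> vcar A \<Longrightarrow> h \<in> hcar A \<Longrightarrow> act A (vmul A v w) h = act A v (act A w h)" by blast
qed

lemma act_ins: "forest_algebra A \<Longrightarrow> h \<in> hcar A \<Longrightarrow> h' \<in> hcar A \<Longrightarrow> act A (ins A h) h' = hadd A h h'"
proof -
  assume "forest_algebra A"
  then have "\<forall>h\<in>hcar A. ins A h \<in> vcar A \<and> (\<forall>h'\<in>hcar A. act A (ins A h) h' = hadd A h h')"
    unfolding forest_algebra_def by (elim conjE) assumption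
  then show "h \<in> hcar A \<Longrightarrow> h' \<in> hcar A \<Longrightarrow> act A (ins A h) h' = hadd A h h'" by blast
qed

lemma ins_cl: "forest_algebra A \<Longrightarrow> h \<in> hcar A \<Longrightarrow> ins A h \<in> vcar A"
proof -
  assume "forest_algebra A"
  then have "\<forall>h\<in>hcar A. ins A h \<in> vcar A \<and> (\<forall>h'\<in>hcar A. act A (ins A h) h' = hadd A h h')"
    unfolding forest_algebra_def by (elim conjE) assumption
  then show "h \<in> hcar A \<Longrightarrow> ins A h \<in> vcar A" by blast
qed

lemma act_cl: "forest_algebra A \<Longrightarrow> v \<in> vcar A \<Longrightarrow> h \<in> hcar A \<Longrightarrow> act A v h \<in> hcar A"
proof -
  assume "forest_algebra A"
  then have "\<forall>v\<in>vcar A. \<forall>h\<in>hcar A. act A v h \<in> hcar A"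
    unfolding forest_algebra_def by (elim conjE) assumption
  then show "v \<in> vcar A \<Longrightarrow> h \<in> hcar A \<Longrightarrow> act A v h \<in> hcar A" by blast
qed

lemma vmul_cl: "forest_algebra A \<Longrightarrow> v \<in> vcar A \<Longrightarrow> w \<in> vcar A \<Longrightarrow> vmul A v w \<in> vcar A"
proof -
  assume "forest_algebra A"
  then have "\<forall>x\<in>vcar A. \<forall>y\<in>vcar A. vmul A x y \<in> vcar A"
    unfolding forest_algebra_def by (elim conjE) assumption
  then show "v \<in> vcar A \<Longrightarrow> w \<in> vcar A \<Longrightarrow> vmul A v w \<in> vcar A" by blast
qed

context
  fixes A :: "('h1, 'v1) forest_algebra" and B :: "('h2, 'v2) forest_algebra"
    and ah :: "'a forest \<Rightarrow> 'h1" and av :: "'a ctx \<Rightarrow> 'v1"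
    and bh :: "'a forest \<Rightarrow> 'h2" and bv :: "'a ctx \<Rightarrow> 'v2"
  assumes fa: "forest_algebra A" and fb: "forest_algebra B"
    and mA: "free_morphism A ah av" and mB: "free_morphism B bh bv"
    and ld: "locally_distributive A B ah av bh bv"
begin

abbreviation "HA \<equiv> half_arrows ah bh"
abbreviation "up \<equiv> upset A B ah bh"
abbreviation "E \<equiv> arrow_act A av"

lemma HA_inC: "x \<in> HA \<Longrightarrow> inC A B x"
  using fm_facts(1)[OF mA] fm_facts(1)[OF mB] by (auto simp: half_arrows_def inC_def)

lemma HA_sum: "x \<in> HA \<Longrightarrow> y \<in> HA \<Longrightarrow> half_sum A B x y \<in> HA"
proof -
  assume "x \<in> HA" "y \<in> HA"
  then obtain s t where "x = (ah s, bh s)" "y = (ah t, bh t)" by (auto simp: half_arrows_def)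
  then have "half_sum A B x y = (ah (s |\<union>| t), bh (s |\<union>| t))"
    by (simp add: half_sum_def fm_facts(3)[OF mA] fm_facts(3)[OF mB])
  then show ?thesis by (simp add: half_arrows_def)
qed

lemma E_HA: "x \<in> HA \<Longrightarrow> snd x = h \<Longrightarrow> is_arrow B bv h p h' \<Longrightarrow> E h p h' x \<in> HA"
proof -
  assume "x \<in> HA" "snd x = h" "is_arrow B bv h p h'"
  then obtain s where s: "x = (ah s, bh s)" "bh s = h" "act B (bv p) h = h'"
    by (auto simp: half_arrows_def is_arrow_def)
  then have "E h p h' x = (ah (plug p s), bh (plug p s))"
    by (simp add: arrow_act_def fm_facts(5)[OF mA] fm_facts(5)[OF mB])
  then show ?thesis by (simp add: half_arrows_def)
qed

lemma E_sum: "x \<in> HA \<Longrightarrow> y \<in> HA \<Longrightarrow> snd x = h \<Longrightarrow> snd y = h \<Longrightarrow> is_arrow B bv h p h' \<Longrightarrow>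
  E h p h' (half_sum A B x y) = half_sum A B (E h p h' x) (E h p h' y)"
  using ld unfolding locally_distributive_def is_arrow_def by blast

lemma E_mono: "x \<in> HA \<Longrightarrow> y \<in> HA \<Longrightarrow> snd x = h \<Longrightarrow> snd y = h \<Longrightarrow> is_arrow B bv h p h' \<Longrightarrow>
  hle A B x y \<Longrightarrow> hle A B (E h p h' x) (E h p h' y)"
  using E_sum[of x y h p h'] by (simp add: hle_def)

lemma up_sum: "x \<in> HA \<Longrightarrow> y \<in> HA \<Longrightarrow> up (half_sum A B x y) = up x \<inter> up y"
  unfolding upset_def using hle_sum_iff[OF fa fb, of x y] HA_inC by blast

lemma up_inj: "x \<in> HA \<Longrightarrow> y \<in> HA \<Longrightarrow> up x = up y \<Longrightarrow> x = y"
proof -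
  assume x: "x \<in> HA" and y: "y \<in> HA" and e: "up x = up y"
  have "x \<in> up x" "y \<in> up y" using x y hle_refl[OF fa fb] HA_inC by (auto simp: upset_def)
  then have "hle A B y x" "hle A B x y" using e by (auto simp: upset_def)
  then show "x = y" using hle_antisym[OF fa fb] HA_inC x y by blast
qed

lemma up_Pow: "up x \<in> Pow HA"
  by (auto simp: upset_def)


definition "Kp h p h' = {g \<in> vcar (Galg HA). \<forall>x\<in>HA. snd x = h \<longrightarrow> g (up x) = up (E h p h' x)}"

lemma KV_cls:
  assumes "is_arrow B bv h p h'"
  shows "KVd A B ah av bh (arrow_class ah B bh bv h p h') = Kp h p h'"
proof
  have "(h, p, h') \<in> arrow_class ah B bh bv h p h'"
    using assms by (auto simp: arrow_class_def arrow_equiv_def)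
  then show "KVd A B ah av bh (arrow_class ah B bh bv h p h') \<subseteq> Kp h p h'"
    unfolding KVd_def Kp_def by fastforce
next
  show "Kp h p h' \<subseteq> KVd A B ah av bh (arrow_class ah B bh bv h p h')"
  proof
    fix g assume g: "g \<in> Kp h p h'"
    have "g (up x) = up (E (fst t) (fst (snd t)) (snd (snd t)) x)"
      if t: "t \<in> arrow_class ah B bh bv h p h'" and x: "x \<in> HA" and sx: "snd x = fst t" for t x
    proof -
      from t obtain q where tq: "t = (h, q, h')" and eq: "arrow_equiv ah bh h p q"
        by (auto simp: arrow_class_def)
      from x obtain s where s: "x = (ah s, bh s)" by (auto simp: half_arrows_def)
      have bs: "bh s = h" using sx s tq by simp
      have "E h q h' x = E h p h' x"
        using eq bs s by (simp add: arrow_act_def arrow_equiv_def fm_facts(5)[OF mA, symmetric])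
      then show ?thesis using g x sx tq by (simp add: Kp_def)
    qed
    then show "g \<in> KVd A B ah av bh (arrow_class ah B bh bv h p h')"
      using g unfolding KVd_def Kp_def by blast
  qed
qed

lemma Kp_ne:
  assumes arr: "is_arrow B bv h0 p h'" and fin: "finite HA"
  shows "\<exists>g. g \<in> Kp h0 p h'"
proof -
  have h0: "h0 \<in> hcar B" using arr by (simp add: is_arrow_def)
  define S where "S z = {x \<in> HA. snd x = h0 \<and> hle A B (E h0 p h' x) z}" for z
  define g where "g = restrict (\<lambda>U. {z \<in> HA. \<exists>m\<in>S z. (\<forall>y\<in>S z. hle A B y m) \<and> m \<in> U}) (Pow HA)"
  have SHA: "S z \<subseteq> HA" for z by (auto simp: S_def)
  have Scl: "\<forall>a\<in>S z. \<forall>b\<in>S z. half_sum A B a b \<in> S z" if z: "z \<in> HA" for z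
  proof (intro ballI)
    fix a b assume a: "a \<in> S z" and b: "b \<in> S z"
    have aH: "a \<in> HA" "snd a = h0" "hle A B (E h0 p h' a) z" using a by (auto simp: S_def)
    have bH: "b \<in> HA" "snd b = h0" "hle A B (E h0 p h' b) z" using b by (auto simp: S_def)
    have "half_sum A B a b \<in> HA" using HA_sum aH bH by blast
    moreover have "snd (half_sum A B a b) = h0"
      using aH bH hadd_idem[OF fb h0] by (simp add: half_sum_def)
    moreover have "hle A B (E h0 p h' (half_sum A B a b)) z"
    proof -
      have Ea: "inC A B (E h0 p h' a)" using E_HA[OF aH(1,2) arr] HA_inC by blast
      have Eb: "inC A B (E h0 p h' b)" using E_HA[OF bH(1,2) arr] HA_inC by blast
      have zC: "inC A B z" using z HA_inC by blast
      show ?thesis using E_sum[OF aH(1) bH(1) aH(2) bH(2) arr] hle_sum_iff[OF fa fb Ea Eb zC] aH(3) bH(3)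
        by simp
    qed
    ultimately show "half_sum A B a b \<in> S z" by (simp add: S_def)
  qed
  have gv: "g \<in> vcar (Galg HA)"
  proof -
    have "g \<in> Pow HA \<rightarrow>\<^sub>E Pow HA" by (auto simp: g_def)
    moreover have "g (U \<inter> V) = g U \<inter> g V" if U: "U \<in> Pow HA" and V: "V \<in> Pow HA" for U V
    proof
      show "g (U \<inter> V) \<subseteq> g U \<inter> g V" using U V by (auto simp: g_def)
      show "g U \<inter> g V \<subseteq> g (U \<inter> V)"
      proof
        fix z assume "z \<in> g U \<inter> g V"
        then obtain m1 m2 where z: "z \<in> HA" and m1: "m1 \<in> S z" "\<forall>y\<in>S z. hle A B y m1" "m1 \<in> U"
          and m2: "m2 \<in> S z" "\<forall>y\<in>S z. hle A B y m2" "m2 \<in> V"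
          using U V by (auto simp: g_def)
        have "m1 = m2" using hle_antisym[OF fa fb, of m1 m2] m1 m2 SHA HA_inC by blast
        then show "z \<in> g (U \<inter> V)" using U V z m1 m2 by (auto simp: g_def)
      qed
    qed
    ultimately show ?thesis by simp
  qed
  have "g (up x) = up (E h0 p h' x)" if x: "x \<in> HA" "snd x = h0" for x
  proof
    have xC: "inC A B x" using x HA_inC by blast
    have ExH: "E h0 p h' x \<in> HA" using E_HA[OF x arr] .
    show "g (up x) \<subseteq> up (E h0 p h' x)"
    proof
      fix z assume "z \<in> g (up x)"
      then obtain m where z: "z \<in> HA" and m: "m \<in> S z" "m \<in> up x"
        using up_Pow by (auto simp: g_def)
      have mH: "m \<in> HA" "snd m = h0" "hle A B (E h0 p h' m) z" using m by (auto simp: S_def)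
      have xm: "hle A B x m" using m by (simp add: upset_def)
      have EmH: "E h0 p h' m \<in> HA" using E_HA[OF mH(1,2) arr] .
      have "hle A B (E h0 p h' x) (E h0 p h' m)" using E_mono[OF x(1) mH(1) x(2) mH(2) arr xm] .
      then have "hle A B (E h0 p h' x) z"
        using hle_trans[OF fa fb, of "E h0 p h' x" "E h0 p h' m" z] mH(3) ExH EmH z HA_inC by blast
      then show "z \<in> up (E h0 p h' x)" using z by (simp add: upset_def)
    qed
    show "up (E h0 p h' x) \<subseteq> g (up x)"
    proof
      fix z assume "z \<in> up (E h0 p h' x)"
      then have z: "z \<in> HA" and Exz: "hle A B (E h0 p h' x) z" by (auto simp: upset_def)
      have xS: "x \<in> S z" using x Exz by (simp add: S_def)
      have "finite (S z)" using fin SHA finite_subset by blast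
      then obtain m where m: "m \<in> S z" "\<forall>y\<in>S z. hle A B y m"
        using max_exists[OF fa fb, of "S z" "S z"] xS Scl[OF z] SHA HA_inC by blast
      have "m \<in> HA" using m(1) SHA[of z] by blast
      then have "m \<in> up x" using m xS by (auto simp: upset_def)
      then show "z \<in> g (up x)" using z m up_Pow by (auto simp: g_def)
    qed
  qed
  then have "g \<in> Kp h0 p h'" using gv by (simp add: Kp_def)
  then show ?thesis by blast
qed


lemma cadd_arrow:
  assumes arr: "is_arrow B bv h p h'"
  shows "is_arrow B bv h (cadd s p) (hadd B (bh s) h')"
proof -
  have h: "h \<in> hcar B" using arr by (simp add: is_arrow_def)
  have "cadd s p = ccomp (CHole s) p" by simp
  then have "bv (cadd s p) = vmul B (ins B (bh s)) (bv p)"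
    by (simp only: fm_facts(4)[OF mB] fm_facts(6)[OF mB])
  then have "act B (bv (cadd s p)) h = act B (ins B (bh s)) (act B (bv p) h)"
    using act_comp[OF fb ins_cl[OF fb fm_facts(1)[OF mB]] fm_facts(2)[OF mB] h] by simp
  also have "\<dots> = act B (ins B (bh s)) h'" using arr by (simp add: is_arrow_def)
  also have "\<dots> = hadd B (bh s) h'"
  proof -
    have "act B (bv p) h \<in> hcar B" using act_cl[OF fb fm_facts(2)[OF mB] h] .
    then have "h' \<in> hcar B" using arr unfolding is_arrow_def by blast
    then show ?thesis using act_ins[OF fb fm_facts(1)[OF mB]] by simp
  qed
  finally show ?thesis using h by (simp add: is_arrow_def)
qed

lemma cadd_E:
  assumes x: "x \<in> HA"
  shows "half_sum A B (ah s, bh s) (E h p h' x) = E h (cadd s p) (hadd B (bh s) h') x"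
proof -
  have fx: "fst x \<in> hcar A" using x HA_inC by (simp add: inC_def)
  have "cadd s p = ccomp (CHole s) p" by simp
  then have "av (cadd s p) = vmul A (ins A (ah s)) (av p)"
    by (simp only: fm_facts(4)[OF mA] fm_facts(6)[OF mA])
  then have "act A (av (cadd s p)) (fst x) = act A (ins A (ah s)) (act A (av p) (fst x))"
    using act_comp[OF fa ins_cl[OF fa fm_facts(1)[OF mA]] fm_facts(2)[OF mA] fx] by simp
  also have "\<dots> = hadd A (ah s) (act A (av p) (fst x))"
    using act_ins[OF fa fm_facts(1)[OF mA] act_cl[OF fa fm_facts(2)[OF mA] fx]] .
  finally show ?thesis by (simp add: half_sum_def arrow_act_def)
qed

lemma hv_K:
  assumes arr: "is_arrow B bv h p h'" and v: "v \<in> Kp h p h'"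
  shows "vmul (Galg HA) (ins (Galg HA) (up (ah s, bh s))) v \<in> Kp h (cadd s p) (hadd B (bh s) h')"
proof -
  have Gf: "forest_algebra (Galg HA)" by (rule Galg_fa)
  have vv: "v \<in> vcar (Galg HA)" using v by (simp add: Kp_def)
  have iv: "ins (Galg HA) (up (ah s, bh s)) \<in> vcar (Galg HA)"
    using ins_cl[OF Gf, of "up (ah s, bh s)"] up_Pow by simp
  have sH: "(ah s, bh s) \<in> HA" by (simp add: half_arrows_def)
  have "vmul (Galg HA) (ins (Galg HA) (up (ah s, bh s))) v (up x) = up (E h (cadd s p) (hadd B (bh s) h') x)"
    if x: "x \<in> HA" "snd x = h" for x
  proof -
    have vx: "v (up x) = up (E h p h' x)" using v x by (simp add: Kp_def)
    have "vmul (Galg HA) (ins (Galg HA) (up (ah s, bh s))) v (up x) = up (ah s, bh s) \<inter> v (up x)"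
      using up_Pow[of x] vv up_Pow[of "E h p h' x"] vx by auto
    also have "\<dots> = up (half_sum A B (ah s, bh s) (E h p h' x))"
      using vx up_sum[OF sH E_HA[OF x arr]] by simp
    finally show ?thesis using cadd_E[OF x(1)] by simp
  qed
  then show ?thesis using vmul_cl[OF Gf iv vv] by (simp add: Kp_def)
qed

lemma divides:
  assumes fin: "finite HA"
  shows "derived_divides A B ah av bh bv (Galg HA)"
proof -
  define cls where "cls = arrow_class ah B bh bv"
  have KVc: "is_arrow B bv h p h' \<Longrightarrow> KVd A B ah av bh (cls h p h') = Kp h p h'" for h p h'
    using KV_cls by (simp add: cls_def)
  show ?thesis
    unfolding derived_divides_def Let_def
    apply (rule exI[of _ "\<lambda>x. {up x}"])
    apply (rule exI[of _ "KVd A B ah av bh"])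
    apply (fold cls_def)
    apply (intro conjI)
  proof -
    show "\<forall>x\<in>HA. {up x} \<noteq> {} \<and> {up x} \<subseteq> hcar (Galg HA)" using up_Pow by simp
    show "\<forall>h p h'. is_arrow B bv h p h' \<longrightarrow> KVd A B ah av bh (cls h p h') \<noteq> {} \<and> KVd A B ah av bh (cls h p h') \<subseteq> vcar (Galg HA)"
      using KVc Kp_ne[OF _ fin] by (auto simp: Kp_def)
    show "\<forall>h1 h2 h3 p q. is_arrow B bv h2 p h3 \<and> is_arrow B bv h1 q h2 \<longrightarrow>
      (\<forall>f\<in>KVd A B ah av bh (cls h2 p h3). \<forall>e\<in>KVd A B ah av bh (cls h1 q h2).
        vmul (Galg HA) f e \<in> KVd A B ah av bh (cls h1 (ccomp p q) h3))"
    proof (intro allI impI ballI)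
      fix h1 h2 h3 p q f e
      assume a: "is_arrow B bv h2 p h3 \<and> is_arrow B bv h1 q h2"
        and f: "f \<in> KVd A B ah av bh (cls h2 p h3)" and e: "e \<in> KVd A B ah av bh (cls h1 q h2)"
      have a1: "is_arrow B bv h2 p h3" and a2: "is_arrow B bv h1 q h2" using a by auto
      have h1: "h1 \<in> hcar B" using a2 by (simp add: is_arrow_def)
      have a3: "is_arrow B bv h1 (ccomp p q) h3"
        using a1 a2 h1 act_comp[OF fb fm_facts(2)[OF mB] fm_facts(2)[OF mB] h1]
        by (simp add: is_arrow_def fm_facts(4)[OF mB])
      have fK: "f \<in> Kp h2 p h3" and eK: "e \<in> Kp h1 q h2" using f e KVc a1 a2 by auto
      have fv: "f \<in> vcar (Galg HA)" and ev: "e \<in> vcar (Galg HA)" using fK eK by (auto simp: Kp_def)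
      have "vmul (Galg HA) f e (up x) = up (E h1 (ccomp p q) h3 x)" if x: "x \<in> HA" "snd x = h1" for x
      proof -
        have ex: "e (up x) = up (E h1 q h2 x)" using eK x by (simp add: Kp_def)
        have ExH: "E h1 q h2 x \<in> HA" using E_HA[OF x a2] .
        have fex: "f (e (up x)) = up (E h2 p h3 (E h1 q h2 x))"
          using fK ExH ex by (simp add: Kp_def arrow_act_def)
        have fx: "fst x \<in> hcar A" using x HA_inC by (simp add: inC_def)
        have "E h2 p h3 (E h1 q h2 x) = E h1 (ccomp p q) h3 x"
          using act_comp[OF fa fm_facts(2)[OF mA] fm_facts(2)[OF mA] fx]
          by (simp add: arrow_act_def fm_facts(4)[OF mA])
        then show ?thesis using fex up_Pow[of x] by simp
      qed
      then have "vmul (Galg HA) f e \<in> Kp h1 (ccomp p q) h3"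
        using vmul_cl[OF Galg_fa fv ev] by (simp add: Kp_def)
      then show "vmul (Galg HA) f e \<in> KVd A B ah av bh (cls h1 (ccomp p q) h3)" using KVc[OF a3] by simp
    qed
    show "\<forall>x\<in>HA. \<forall>p h'. is_arrow B bv (snd x) p h' \<longrightarrow>
      (\<forall>v\<in>KVd A B ah av bh (cls (snd x) p h'). \<forall>k\<in>{up x}. act (Galg HA) v k \<in> {up (E (snd x) p h' x)})"
      using KVc by (auto simp: Kp_def)
    show "\<forall>x\<in>HA. \<forall>y\<in>HA. \<forall>k\<in>{up x}. \<forall>l\<in>{up y}. hadd (Galg HA) k l \<in> {up (half_sum A B x y)}"
      using up_sum by simp
    show "\<forall>s h p h'. is_arrow B bv h p h' \<longrightarrow> (\<forall>k\<in>{up (ah s, bh s)}. \<forall>v\<in>KVd A B ah av bh (cls h p h').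
      hvadd (Galg HA) k v \<in> KVd A B ah av bh (cls h (cadd s p) (hadd B (bh s) h')))"
      using KVc hv_K cadd_arrow by (auto simp: hvadd_def)
    show "\<forall>s h p h'. is_arrow B bv h p h' \<longrightarrow> (\<forall>k\<in>{up (ah s, bh s)}. \<forall>v\<in>KVd A B ah av bh (cls h p h').
      vhadd (Galg HA) v k \<in> KVd A B ah av bh (cls h (cadd s p) (hadd B h' (bh s))))"
    proof (intro allI impI ballI)
      fix s h p h' k v
      assume arr: "is_arrow B bv h p h'" and k: "k \<in> {up (ah s, bh s)}" and v: "v \<in> KVd A B ah av bh (cls h p h')"
      have "hadd B h' (bh s) = hadd B (bh s) h'"
        using arr hadd_comm[OF fb] act_cl[OF fb fm_facts(2)[OF mB]] fm_facts(1)[OF mB]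
        by (metis is_arrow_def)
      then show "vhadd (Galg HA) v k \<in> KVd A B ah av bh (cls h (cadd s p) (hadd B h' (bh s)))"
        using KVc[OF arr] KVc[OF cadd_arrow[OF arr]] hv_K[OF arr] k v by (simp add: vhadd_def)
    qed
    show "\<forall>h p q h'. is_arrow B bv h p h' \<and> is_arrow B bv h q h' \<and> cls h p h' \<noteq> cls h q h' \<longrightarrow>
      KVd A B ah av bh (cls h p h') \<inter> KVd A B ah av bh (cls h q h') = {}"
    proof (intro allI impI)
      fix h p q h'
      assume a: "is_arrow B bv h p h' \<and> is_arrow B bv h q h' \<and> cls h p h' \<noteq> cls h q h'"
      have a1: "is_arrow B bv h p h'" and a2: "is_arrow B bv h q h'" using a by auto
      have ne: "\<not> arrow_equiv ah bh h p q"
      proof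
        assume eq: "arrow_equiv ah bh h p q"
        have "arrow_equiv ah bh h p r \<longleftrightarrow> arrow_equiv ah bh h q r" for r
          using eq by (auto simp: arrow_equiv_def)
        then have "cls h p h' = cls h q h'" by (simp add: cls_def arrow_class_def)
        then show False using a by simp
      qed
      then obtain s where s: "bh s = h" "ah (plug p s) \<noteq> ah (plug q s)"
        by (auto simp: arrow_equiv_def)
      have xH: "(ah s, bh s) \<in> HA" by (simp add: half_arrows_def)
      show "KVd A B ah av bh (cls h p h') \<inter> KVd A B ah av bh (cls h q h') = {}"
      proof (rule ccontr)
        assume "KVd A B ah av bh (cls h p h') \<inter> KVd A B ah av bh (cls h q h') \<noteq> {}"
        then obtain g where g1: "g \<in> Kp h p h'" and g2: "g \<in> Kp h q h'" using KVc[OF a1] KVc[OF a2] by auto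
        have "up (E h p h' (ah s, bh s)) = up (E h q h' (ah s, bh s))"
          using g1 g2 xH s(1) by (auto simp: Kp_def)
        then have "E h p h' (ah s, bh s) = E h q h' (ah s, bh s)"
          using up_inj E_HA[OF xH _ a1] E_HA[OF xH _ a2] s(1) by simp
        then show False using s by (simp add: arrow_act_def fm_facts(5)[OF mA])
      qed
    qed
    show "\<forall>x\<in>HA. \<forall>y\<in>HA. x \<noteq> y \<and> snd x = snd y \<longrightarrow> {up x} \<inter> {up y} = {}"
      using up_inj by auto
  qed
qed

end



lemma transport:
  fixes G :: "('x, 'y) forest_algebra"
  assumes fin: "finite_forest_algebra G" and dis: "distributive G"
    and div: "derived_divides A B ah av bh bv G"
  shows "\<exists>F :: (nat, nat) forest_algebra.
           finite_forest_algebra F \<and> distributive F \<and> derived_divides A B ah av bh bv F"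
proof -
  have fa: "forest_algebra G" and fH: "finite (hcar G)" and fV: "finite (vcar G)"
    using fin by (auto simp: finite_forest_algebra_def)
  obtain fh :: "'x \<Rightarrow> nat" and n where fh: "inj_on fh (hcar G)"
    using finite_imp_inj_to_nat_seg[OF fH] by blast
  obtain fv :: "'y \<Rightarrow> nat" and m where fv: "inj_on fv (vcar G)"
    using finite_imp_inj_to_nat_seg[OF fV] by blast
  define ih where "ih = inv_into (hcar G) fh"
  define iv where "iv = inv_into (vcar G) fv"
  have ih[simp]: "x \<in> hcar G \<Longrightarrow> ih (fh x) = x" for x
    unfolding ih_def using fh by (simp add: inv_into_f_f)
  have iv[simp]: "x \<in> vcar G \<Longrightarrow> iv (fv x) = x" for x
    unfolding iv_def using fv by (simp add: inv_into_f_f)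
  have fhe[simp]: "x \<in> hcar G \<Longrightarrow> y \<in> hcar G \<Longrightarrow> fh x = fh y \<longleftrightarrow> x = y" for x y
    using fh by (meson inj_on_eq_iff)
  have fve[simp]: "x \<in> vcar G \<Longrightarrow> y \<in> vcar G \<Longrightarrow> fv x = fv y \<longleftrightarrow> x = y" for x y
    using fv by (meson inj_on_eq_iff)
  define F :: "(nat, nat) forest_algebra" where
    "F = \<lparr>hcar = fh ` hcar G, vcar = fv ` vcar G,
          hadd = \<lambda>a b. fh (hadd G (ih a) (ih b)), hzero = fh (hzero G),
          vmul = \<lambda>a b. fv (vmul G (iv a) (iv b)), vone = fv (vone G),
          act = \<lambda>v h. fh (act G (iv v) (ih h)), ins = \<lambda>h. fv (ins G (ih h))\<rparr>"
  note G = fa[unfolded forest_algebra_def]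
  have faF: "forest_algebra F"
    unfolding forest_algebra_def
  proof (intro conjI)
    show "\<forall>v\<in>vcar F. \<forall>w\<in>vcar F. (\<forall>h\<in>hcar F. act F v h = act F w h) \<longrightarrow> v = w"
    proof (intro ballI impI)
      fix v w assume v: "v \<in> vcar F" and w: "w \<in> vcar F" and e: "\<forall>h\<in>hcar F. act F v h = act F w h"
      from v w obtain v0 w0 where v0: "v0 \<in> vcar G" "v = fv v0" and w0: "w0 \<in> vcar G" "w = fv w0"
        by (auto simp: F_def)
      have "\<forall>h\<in>hcar G. act G v0 h = act G w0 h"
      proof
        fix h assume h: "h \<in> hcar G"
        have "fh (act G v0 h) = fh (act G w0 h)" using e h v0 w0 by (auto simp: F_def)
        then show "act G v0 h = act G w0 h" using G h v0 w0 by simp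
      qed
      then show "v = w" using G v0 w0 by metis
    qed
  qed (use G in \<open>auto simp: F_def image_iff\<close>)
  have "finite_forest_algebra F" using faF fH fV by (simp add: finite_forest_algebra_def F_def)
  moreover have "distributive F" using dis G
    by (auto simp: distributive_def F_def)
  moreover have "derived_divides A B ah av bh bv F"
  proof -
    from div obtain KH KV where K: "let cls = arrow_class ah B bh bv in
      (\<forall>x\<in>half_arrows ah bh. KH x \<noteq> {} \<and> KH x \<subseteq> hcar G) \<and>
      (\<forall>h p h'. is_arrow B bv h p h' \<longrightarrow> KV (cls h p h') \<noteq> {} \<and> KV (cls h p h') \<subseteq> vcar G) \<and>
      (\<forall>h1 h2 h3 p q. is_arrow B bv h2 p h3 \<and> is_arrow B bv h1 q h2 \<longrightarrow>
         (\<forall>f\<in>KV (cls h2 p h3). \<forall>e\<in>KV (cls h1 q h2). vmul G f e \<in> KV (cls h1 (ccomp p q) h3))) \<and>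
      (\<forall>x\<in>half_arrows ah bh. \<forall>p h'. is_arrow B bv (snd x) p h' \<longrightarrow>
         (\<forall>v\<in>KV (cls (snd x) p h'). \<forall>k\<in>KH x.
            act G v k \<in> KH (arrow_act A av (snd x) p h' x))) \<and>
      (\<forall>x\<in>half_arrows ah bh. \<forall>y\<in>half_arrows ah bh.
         (\<forall>k\<in>KH x. \<forall>l\<in>KH y. hadd G k l \<in> KH (half_sum A B x y))) \<and>
      (\<forall>s h p h'. is_arrow B bv h p h' \<longrightarrow>
         (\<forall>k\<in>KH (ah s, bh s). \<forall>v\<in>KV (cls h p h').
            hvadd G k v \<in> KV (cls h (cadd s p) (hadd B (bh s) h')))) \<and>
      (\<forall>s h p h'. is_arrow B bv h p h' \<longrightarrow>
         (\<forall>k\<in>KH (ah s, bh s). \<forall>v\<in>KV (cls h p h').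
            vhadd G v k \<in> KV (cls h (cadd s p) (hadd B h' (bh s))))) \<and>
      (\<forall>h p q h'. is_arrow B bv h p h' \<and> is_arrow B bv h q h' \<and> cls h p h' \<noteq> cls h q h' \<longrightarrow>
         KV (cls h p h') \<inter> KV (cls h q h') = {}) \<and>
      (\<forall>x\<in>half_arrows ah bh. \<forall>y\<in>half_arrows ah bh. x \<noteq> y \<and> snd x = snd y \<longrightarrow>
         KH x \<inter> KH y = {})"
      unfolding derived_divides_def by blast
    define cls where "cls = arrow_class ah B bh bv"
    note K = K[unfolded Let_def, folded cls_def]
    note K1 = K[THEN conjunct1] and K2 = K[THEN conjunct2, THEN conjunct1]
      and K3 = K[THEN conjunct2, THEN conjunct2, THEN conjunct1]
      and K4 = K[THEN conjunct2, THEN conjunct2, THEN conjunct2, THEN conjunct1]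
      and K5 = K[THEN conjunct2, THEN conjunct2, THEN conjunct2, THEN conjunct2, THEN conjunct1]
      and K6 = K[THEN conjunct2, THEN conjunct2, THEN conjunct2, THEN conjunct2, THEN conjunct2, THEN conjunct1]
      and K7 = K[THEN conjunct2, THEN conjunct2, THEN conjunct2, THEN conjunct2, THEN conjunct2, THEN conjunct2, THEN conjunct1]
      and K8 = K[THEN conjunct2, THEN conjunct2, THEN conjunct2, THEN conjunct2, THEN conjunct2, THEN conjunct2, THEN conjunct2, THEN conjunct1]
      and K9 = K[THEN conjunct2, THEN conjunct2, THEN conjunct2, THEN conjunct2, THEN conjunct2, THEN conjunct2, THEN conjunct2, THEN conjunct2]
    have KHs: "x \<in> half_arrows ah bh \<Longrightarrow> KH x \<subseteq> hcar G" for x using K1 by blast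
    have KHs': "KH (ah s, bh s) \<subseteq> hcar G" for s using KHs[of "(ah s, bh s)"]
      by (simp add: half_arrows_def)
    have KVs: "is_arrow B bv h p h' \<Longrightarrow> KV (cls h p h') \<subseteq> vcar G" for h p h' using K2 by blast
    show ?thesis
      unfolding derived_divides_def Let_def
      apply (rule exI[of _ "\<lambda>x. fh ` KH x"])
      apply (rule exI[of _ "\<lambda>c. fv ` KV c"])
      apply (fold cls_def)
      apply (intro conjI)
      subgoal using K1 KHs by (fastforce simp: F_def)
      subgoal using K2 KVs by (fastforce simp: F_def)
      subgoal
      proof (intro allI impI ballI)
        fix h1 h2 h3 p q f e
        assume a: "is_arrow B bv h2 p h3 \<and> is_arrow B bv h1 q h2"
          and f: "f \<in> fv ` KV (cls h2 p h3)" and e: "e \<in> fv ` KV (cls h1 q h2)"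
        from f obtain f0 where f0: "f0 \<in> KV (cls h2 p h3)" "f = fv f0" by blast
        from e obtain e0 where e0: "e0 \<in> KV (cls h1 q h2)" "e = fv e0" by blast
        have "f0 \<in> vcar G" "e0 \<in> vcar G" using f0 e0 KVs a by blast+
        then have "vmul F f e = fv (vmul G f0 e0)" using f0 e0 by (simp add: F_def)
        moreover have "vmul G f0 e0 \<in> KV (cls h1 (ccomp p q) h3)" using K3 a f0 e0 by blast
        ultimately show "vmul F f e \<in> fv ` KV (cls h1 (ccomp p q) h3)" by simp
      qed
      subgoal
      proof (intro allI impI ballI)
        fix x p h' v k
        assume x: "x \<in> half_arrows ah bh" and a: "is_arrow B bv (snd x) p h'"
          and v: "v \<in> fv ` KV (cls (snd x) p h')" and k: "k \<in> fh ` KH x"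
        from v obtain v0 where v0: "v0 \<in> KV (cls (snd x) p h')" "v = fv v0" by blast
        from k obtain k0 where k0: "k0 \<in> KH x" "k = fh k0" by blast
        have "v0 \<in> vcar G" "k0 \<in> hcar G" using v0 k0 KVs KHs a x by blast+
        then have "act F v k = fh (act G v0 k0)" using v0 k0 by (simp add: F_def)
        moreover have "act G v0 k0 \<in> KH (arrow_act A av (snd x) p h' x)" using K4 a v0 k0 x by blast
        ultimately show "act F v k \<in> fh ` KH (arrow_act A av (snd x) p h' x)" by simp
      qed
      subgoal
      proof (intro allI impI ballI)
        fix x y k l
        assume x: "x \<in> half_arrows ah bh" and y: "y \<in> half_arrows ah bh"
          and k: "k \<in> fh ` KH x" and l: "l \<in> fh ` KH y"
        from k obtain k0 where k0: "k0 \<in> KH x" "k = fh k0" by blast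
        from l obtain l0 where l0: "l0 \<in> KH y" "l = fh l0" by blast
        have "k0 \<in> hcar G" "l0 \<in> hcar G" using k0 l0 KHs x y by blast+
        then have "hadd F k l = fh (hadd G k0 l0)" using k0 l0 by (simp add: F_def)
        moreover have "hadd G k0 l0 \<in> KH (half_sum A B x y)" using K5 x y k0 l0 by blast
        ultimately show "hadd F k l \<in> fh ` KH (half_sum A B x y)" by simp
      qed
      subgoal
      proof (intro allI impI ballI)
        fix s h p h' k v
        assume a: "is_arrow B bv h p h'"
          and k: "k \<in> fh ` KH (ah s, bh s)" and v: "v \<in> fv ` KV (cls h p h')"
        from v obtain v0 where v0: "v0 \<in> KV (cls h p h')" "v = fv v0" by blast
        from k obtain k0 where k0: "k0 \<in> KH (ah s, bh s)" "k = fh k0" by blast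
        have v0c: "v0 \<in> vcar G" and k0c: "k0 \<in> hcar G" using v0 k0 KVs KHs' a by blast+
        then have "ins G k0 \<in> vcar G" using G by blast
        then have "hvadd F k v = fv (hvadd G k0 v0)" using v0 k0 v0c k0c by (simp add: F_def hvadd_def)
        moreover have "hvadd G k0 v0 \<in> KV (cls h (cadd s p) (hadd B (bh s) h'))" using K6 a v0 k0 by blast
        ultimately show "hvadd F k v \<in> fv ` KV (cls h (cadd s p) (hadd B (bh s) h'))" by simp
      qed
      subgoal
      proof (intro allI impI ballI)
        fix s h p h' k v
        assume a: "is_arrow B bv h p h'"
          and k: "k \<in> fh ` KH (ah s, bh s)" and v: "v \<in> fv ` KV (cls h p h')"
        from v obtain v0 where v0: "v0 \<in> KV (cls h p h')" "v = fv v0" by blast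
        from k obtain k0 where k0: "k0 \<in> KH (ah s, bh s)" "k = fh k0" by blast
        have v0c: "v0 \<in> vcar G" and k0c: "k0 \<in> hcar G" using v0 k0 KVs KHs' a by blast+
        then have "ins G k0 \<in> vcar G" using G by blast
        then have "vhadd F v k = fv (vhadd G v0 k0)" using v0 k0 v0c k0c by (simp add: F_def vhadd_def)
        moreover have "vhadd G v0 k0 \<in> KV (cls h (cadd s p) (hadd B h' (bh s)))" using K7 a v0 k0 by blast
        ultimately show "vhadd F v k \<in> fv ` KV (cls h (cadd s p) (hadd B h' (bh s)))" by simp
      qed
      subgoal
      proof (intro allI impI)
        fix h p q h'
        assume a: "is_arrow B bv h p h' \<and> is_arrow B bv h q h' \<and> cls h p h' \<noteq> cls h q h'"
        then have "KV (cls h p h') \<inter> KV (cls h q h') = {}" using K8 by blast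
        moreover have "KV (cls h p h') \<subseteq> vcar G" "KV (cls h q h') \<subseteq> vcar G" using KVs a by blast+
        ultimately show "fv ` KV (cls h p h') \<inter> fv ` KV (cls h q h') = {}"
          using fve by blast
      qed
      subgoal
      proof (intro ballI impI)
        fix x y
        assume x: "x \<in> half_arrows ah bh" and y: "y \<in> half_arrows ah bh" and a: "x \<noteq> y \<and> snd x = snd y"
        then have "KH x \<inter> KH y = {}" using K9 by blast
        moreover have "KH x \<subseteq> hcar G" "KH y \<subseteq> hcar G" using KHs x y by blast+
        ultimately show "fh ` KH x \<inter> fh ` KH y = {}"
          using fhe by blast
      qed
      done
  qed
  ultimately show ?thesis by blast
qed

theorem mainTheorem5:
  fixes A :: "('h1, 'v1) forest_algebra" and B :: "('h2, 'v2) forest_algebra"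
    and ah :: "'a::finite forest \<Rightarrow> 'h1" and av :: "'a ctx \<Rightarrow> 'v1"
    and bh :: "'a forest \<Rightarrow> 'h2" and bv :: "'a ctx \<Rightarrow> 'v2"
  assumes "finite_forest_algebra A" and "finite_forest_algebra B"
    and "surj_free_morphism A ah av" and "surj_free_morphism B bh bv"
    and "locally_distributive A B ah av bh bv"
  shows "\<exists>F :: (nat, nat) forest_algebra.
           finite_forest_algebra F \<and> distributive F \<and> derived_divides A B ah av bh bv F"
proof -
  have fa: "forest_algebra A" and fA: "finite (hcar A)" using assms(1) by (auto simp: finite_forest_algebra_def)
  have fb: "forest_algebra B" and fB: "finite (hcar B)" using assms(2) by (auto simp: finite_forest_algebra_def)
  have mA: "free_morphism A ah av" using assms(3) by (simp add: surj_free_morphism_def)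
  have mB: "free_morphism B bh bv" using assms(4) by (simp add: surj_free_morphism_def)
  have "half_arrows ah bh \<subseteq> hcar A \<times> hcar B"
    using fm_facts(1)[OF mA] fm_facts(1)[OF mB] by (auto simp: half_arrows_def)
  then have fin: "finite (half_arrows ah bh)" using fA fB finite_subset by blast
  have "derived_divides A B ah av bh bv (Galg (half_arrows ah bh))"
    using divides[OF fa fb mA mB assms(5) fin] .
  then show ?thesis using transport Galg_fin[OF fin] Galg_dis by blast
qed

end
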